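(* Let $a>1$ and $c,d>0$ be fixed. There exist positive constants $M_x$ and $M_y$ (independent of $m,n$ and of $(x,y)$) such that for all $(x,y)\in[0,c]\times[0,d]$ and all $m,n\in\mathbb{N}$, \[ \hat{Y}_{m,n,a}\big((t-x)^4;x,y\big)\leq \frac{M_x}{m^2},\qquad \hat{Y}_{m,n,a}\big((s-y)^4;x,y\big)\leq \frac{M_y}{n^2}. \]
   Context: For $m,n\in\mathbb{N}$, $(x,y)\in[0,\infty)^2$ and integers $k_1,k_2\ge0$ let \[ s_{m,n,k_1,k_2}^a(x,y)=a^{-\frac{x}{a^{1/m}-1}}\,a^{-\frac{y}{a^{1/n}-1}}\,\frac{x^{k_1}y^{k_2}(\log a)^{k_1+k_2}}{(a^{1/m}-1)^{k_1}(a^{1/n}-1)^{k_2}\,k_1!\,k_2!}, \] and \[ \hat{Y}_{m,n,a}(f;x,y)=\sum_{k_1=0}^{\infty}\sum_{k_2=0}^{\infty}s_{m,n,k_1,k_2}^a(x,y)\,f\!\left(\tfrac{k_1}{m},\tfrac{k_2}{n}\right). \] $\hat{Y}_{m,n,a}(g(t,s);x,y)$ denotes the operator applied to $(t,s)\mapsto g(t,s)$ (with $t=k_1/m$, $s=k_2/n$). *)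

theory Defs
  imports "HOL-Analysis.Analysis"
begin

definition s_basis :: "real \<Rightarrow> nat \<Rightarrow> nat \<Rightarrow> nat \<Rightarrow> nat \<Rightarrow> real \<Rightarrow> real \<Rightarrow> real" where
  "s_basis a m n k1 k2 x y =
     a powr (- x / (a powr (1 / real m) - 1)) * a powr (- y / (a powr (1 / real n) - 1)) *
     (x ^ k1 * y ^ k2 * (ln a) ^ (k1 + k2)) /
     ((a powr (1 / real m) - 1) ^ k1 * (a powr (1 / real n) - 1) ^ k2 * fact k1 * fact k2)"

definition Yhat :: "nat \<Rightarrow> nat \<Rightarrow> real \<Rightarrow> (real \<Rightarrow> real \<Rightarrow> real) \<Rightarrow> real \<Rightarrow> real \<Rightarrow> real" where
  "Yhat m n a f x y =
     (\<Sum>k1. \<Sum>k2. s_basis a m n k1 k2 x y * f (real k1 / real m) (real k2 / real n))"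

end

theory Submission
  imports Defs
begin
definition ff :: "nat \<Rightarrow> nat \<Rightarrow> real" where "ff k j = (\<Prod>i<j. real k - real i)"

lemma ff_Suc: "ff (Suc k) (Suc j) = real (Suc k) * ff k j"
  unfolding ff_def prod.lessThan_Suc_shift by simp

lemma ff_small: "ff k 0 = 1" "ff k 1 = real k" "ff k 2 = real k * (real k - 1)"
  "ff k 3 = real k * (real k - 1) * (real k - 2)"
  "ff k 4 = real k * (real k - 1) * (real k - 2) * (real k - 3)"
  by (simp_all add: ff_def numeral_eq_Suc prod.lessThan_Suc)

lemma ff_sums: "(\<lambda>k. l^k / fact k * ff k j) sums (l^j * exp l)"
proof (induction j)
  case 0
  show ?case using exp_converges[of l] by (simp add: ff_def divide_inverse mult.commute)
next
  case (Suc j)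
  have "(\<lambda>k. l * (l^k / fact k * ff k j)) sums (l * (l^j * exp l))" using sums_mult[OF Suc.IH] .
  moreover have "l * (l^k/fact k * ff k j) = l^(Suc k)/fact (Suc k) * ff (Suc k) (Suc j)" for k
    by (simp add: ff_Suc field_simps del: of_nat_Suc)
  ultimately have "(\<lambda>k. l^(Suc k)/fact(Suc k) * ff (Suc k) (Suc j)) sums (l^(Suc j) * exp l)" 
    by (simp add: mult.assoc)
  moreover have "l^0/fact 0 * ff 0 (Suc j) = 0" unfolding ff_def prod.lessThan_Suc_shift by simp
  ultimately show ?case using sums_Suc_iff[of "\<lambda>k. l^k/fact k * ff k (Suc j)"] by simp
qed

definition Gm :: "real \<Rightarrow> real \<Rightarrow> real \<Rightarrow> real" where
 "Gm l m x = ((1/m)^4) * l^4 + (6*(1/m)^4 - 4*x*(1/m)^3) * l^3 + (7*(1/m)^4 - 12*x*(1/m)^3 + 6*x^2*(1/m)^2) * l^2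
   + ((1/m)^4 - 4*x*(1/m)^3 + 6*x^2*(1/m)^2 - 4*x^3*(1/m)) * l + x^4"

lemma pois4: "(\<lambda>k. exp(-l) * l^k / fact k * (real k * (1/m) - x)^4) sums Gm l m x"
proof -
  let ?w = "\<lambda>k. exp(-l) * (l^k / fact k)"
  have S: "(\<lambda>k. ?w k * ff k j) sums (exp(-l) * (l^j * exp l))" for j
    using sums_mult[OF ff_sums[of l j], of "exp(-l)"] by (simp add: mult.assoc)
  have H: "(\<lambda>k. ((1/m)^4) * (?w k * ff k 4) + (6*(1/m)^4 - 4*x*(1/m)^3) * (?w k * ff k 3)
     + (7*(1/m)^4 - 12*x*(1/m)^3 + 6*x^2*(1/m)^2) * (?w k * ff k 2)
     + ((1/m)^4 - 4*x*(1/m)^3 + 6*x^2*(1/m)^2 - 4*x^3*(1/m)) * (?w k * ff k 1) + x^4 * (?w k * ff k 0))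
    sums (((1/m)^4) * (exp(-l) * (l^4 * exp l)) + (6*(1/m)^4 - 4*x*(1/m)^3) * (exp(-l) * (l^3 * exp l))
     + (7*(1/m)^4 - 12*x*(1/m)^3 + 6*x^2*(1/m)^2) * (exp(-l) * (l^2 * exp l))
     + ((1/m)^4 - 4*x*(1/m)^3 + 6*x^2*(1/m)^2 - 4*x^3*(1/m)) * (exp(-l) * (l^1 * exp l)) + x^4 * (exp(-l) * (l^0 * exp l)))"
    by (intro sums_add sums_mult S)
  have E1: "exp(-l) * (l^j * exp l) = l^j" for j by (simp add: exp_minus field_simps)
  have E2: "((1/m)^4) * (?w k * ff k 4) + (6*(1/m)^4 - 4*x*(1/m)^3) * (?w k * ff k 3)
     + (7*(1/m)^4 - 12*x*(1/m)^3 + 6*x^2*(1/m)^2) * (?w k * ff k 2)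
     + ((1/m)^4 - 4*x*(1/m)^3 + 6*x^2*(1/m)^2 - 4*x^3*(1/m)) * (?w k * ff k 1) + x^4 * (?w k * ff k 0)
     = exp(-l) * l^k / fact k * (real k * (1/m) - x)^4" for k
  proof -
    have P: "q^4 * (W * (r*(r-1)*(r-2)*(r-3))) + (6*q^4 - 4*x*q^3) * (W * (r*(r-1)*(r-2)))
      + (7*q^4 - 12*x*q^3 + 6*x^2*q^2) * (W * (r*(r-1))) + (q^4 - 4*x*q^3 + 6*x^2*q^2 - 4*x^3*q) * (W * r) + x^4 * (W * 1)
      = W * (r*q - x)^4" for q r W :: real
      by algebra
    show ?thesis unfolding ff_small using P[of "1/m" "exp(-l) * (l^k / fact k)" "real k"] by simp
  qed
  show ?thesis using H unfolding E1 E2 Gm_def by simp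
qed

lemma Gm_alt:
  fixes m q nu E x :: real
  assumes "m * q = 1"
  shows "Gm (m*nu) m (nu + E*q) = q^2 * (nu*q + 3*nu^2 - 4*E*nu*q + 6*E^2*nu*q + E^4*q^2)"
proof -
  have "m \<noteq> 0" using assms by auto
  then have q: "1/m = q" using assms by (simp add: divide_eq_eq mult.commute)
  have "Gm (m*nu) m (nu + E*q) = q^4 * (m*nu)^4 + (6*q^4 - 4*(nu + E*q)*q^3) * (m*nu)^3 + (7*q^4 - 12*(nu + E*q)*q^3 + 6*(nu + E*q)^2*q^2) * (m*nu)^2
   + (q^4 - 4*(nu + E*q)*q^3 + 6*(nu + E*q)^2*q^2 - 4*(nu + E*q)^3*q) * (m*nu) + (nu + E*q)^4"
    unfolding Gm_def q by simp
  also have "\<dots> = q^2 * (nu*q + 3*nu^2 - 4*E*nu*q + 6*E^2*nu*q + E^4*q^2)"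
    using assms by algebra
  finally show ?thesis .
qed

lemma bound_core:
  fixes a c x :: real and m :: nat
  assumes a: "a > 1" and m: "m \<ge> 1" and x: "0 \<le> x" "x \<le> c"
  defines "u \<equiv> a powr (1 / real m) - 1"
  shows "Gm (x * ln a / u) (real m) x \<le> (c + 3*c^2 + 6*(c*ln a)^2*c + (c*ln a)^4) / (real m)^2"
proof -
  define L where "L = ln a"
  define h where "h = L / real m"
  have L: "L > 0" using a by (simp add: L_def)
  have mpos: "real m > 0" using m by simp
  have h: "h > 0" using L mpos by (simp add: h_def)
  have uh: "u = exp h - 1" using a unfolding u_def h_def L_def powr_def by simp
  have e1: "exp h \<ge> 1 + h" by (rule exp_ge_add_one_self)
  have u: "u > 0" using uh e1 h by simp
  have mu: "real m * u \<ge> L"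
  proof -
    have "real m * (1 + h) \<le> real m * exp h" using e1 mpos by simp
    moreover have "real m * (1 + h) = real m + L" using mpos by (simp add: h_def algebra_simps)
    moreover have "real m * exp h = real m + real m * u" by (simp add: uh algebra_simps)
    ultimately show ?thesis by simp
  qed
  have e2: "1 - h \<le> exp (-h)" using exp_ge_add_one_self[of "-h"] by simp
  have e3: "exp h * (1 - h) \<le> 1" using mult_left_mono[OF e2, of "exp h"] by (simp add: exp_minus)
  have mu2: "real m * u - L \<le> L * u"
  proof -
    have "exp h - 1 - h \<le> h * (exp h - 1)" using e3 by (simp add: algebra_simps)
    then have "real m * (exp h - 1 - h) \<le> real m * (h * (exp h - 1))" using mpos by simp
    then show ?thesis using mpos by (simp add: uh h_def algebra_simps)
  qed
  define nu where "nu = x * L / (real m * u)"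
  define q where "q = 1 / real m"
  define E where "E = (x - nu) * real m"
  have mq: "real m * q = 1" using mpos by (simp add: q_def)
  have q01: "0 < q" "q \<le> 1" using m by (auto simp: q_def)
  have nu0: "nu \<ge> 0" using x L mpos u by (simp add: nu_def)
  have nux: "nu \<le> x"
  proof -
    have "x * L \<le> x * (real m * u)" using mu x by (simp add: mult_left_mono)
    then show ?thesis using mpos u by (simp add: nu_def divide_le_eq)
  qed
  have nuc: "nu \<le> c" using nux x by simp
  have E0: "E \<ge> 0" using nux mpos by (simp add: E_def)
  have EB: "E \<le> c * L"
  proof -
    have "E = x * (real m * u - L) / u" using mpos u by (simp add: E_def nu_def field_simps)
    also have "\<dots> \<le> x * (L * u) / u" using divide_right_mono[OF mult_left_mono[OF mu2 x(1)], of u] u by simp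
    also have "\<dots> = x * L" using u by simp
    also have "\<dots> \<le> c * L" using x L by (simp add: mult_right_mono)
    finally show ?thesis .
  qed
  have l: "x * ln a / u = real m * nu" using mpos u by (simp add: nu_def L_def)
  have xe: "x = nu + E * q" using mpos by (simp add: E_def q_def)
  have G: "Gm (x * ln a / u) (real m) x = q^2 * (nu*q + 3*nu^2 - 4*E*nu*q + 6*E^2*nu*q + E^4*q^2)"
    unfolding l using Gm_alt[OF mq, of nu E] xe by simp

  define B where "B = c * L"
  have B0: "B \<ge> 0" using x L by (simp add: B_def)
  have i1: "nu*q \<le> c" using nuc nu0 q01 mult_mono[of nu c q 1] by simp
  have i2: "3*nu^2 \<le> 3*c^2" using nuc nu0 power_mono[of nu c 2] by simp
  have i3: "- 4*E*nu*q \<le> 0" using E0 nu0 q01 by simp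
  have i4: "6*E^2*nu*q \<le> 6*B^2*c"
  proof -
    have "E^2 \<le> B^2" using E0 EB power_mono[of E B 2] by (simp add: B_def)
    moreover have "nu*q \<le> c" by (rule i1)
    ultimately have "E^2 * (nu*q) \<le> B^2 * c" using nu0 q01 E0 by (intro mult_mono) auto
    then show ?thesis by (simp add: mult.assoc)
  qed
  have i5: "E^4*q^2 \<le> B^4"
  proof -
    have "E^4 \<le> B^4" using E0 EB power_mono[of E B 4] by (simp add: B_def)
    moreover have "q^2 \<le> 1" using q01 by (simp add: power_le_one)
    ultimately show ?thesis using E0 q01 mult_mono[of "E^4" "B^4" "q^2" 1] by simp
  qed
  have "nu*q + 3*nu^2 - 4*E*nu*q + 6*E^2*nu*q + E^4*q^2 \<le> c + 3*c^2 + 6*B^2*c + B^4"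
    using i1 i2 i3 i4 i5 by linarith
  then have "q^2 * (nu*q + 3*nu^2 - 4*E*nu*q + 6*E^2*nu*q + E^4*q^2) \<le> q^2 * (c + 3*c^2 + 6*B^2*c + B^4)"
    by (simp add: mult_left_mono)
  then show ?thesis unfolding G by (simp add: q_def B_def L_def power_divide)
qed

definition pp :: "real \<Rightarrow> nat \<Rightarrow> real" where "pp l k = exp(-l) * l^k / fact k"

lemma pois1: "(\<lambda>k. pp l k) sums 1"
  using sums_mult[OF ff_sums[of l 0], of "exp(-l)"] by (simp add: pp_def ff_small exp_minus field_simps)

lemma pois4': "(\<lambda>k. pp l k * (real k / m - x)^4) sums Gm l m x"
  using pois4[of l m x] by (simp add: pp_def)

lemma s_fact:
  assumes "a > 0" "u > 0" "v > 0"
  shows "a powr (-x/u) * a powr(-y/v) * (x^k1*y^k2*(ln a)^(k1+k2)) / (u^k1 * v^k2 * fact k1 * fact k2)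
    = pp (x*ln a/u) k1 * pp (y*ln a/v) k2"
  using assms by (simp add: pp_def powr_def power_divide power_mult_distrib power_add exp_minus field_simps)

lemma basis_fact:
  assumes "a > 1" "m \<ge> 1" "n \<ge> 1"
  shows "s_basis a m n k1 k2 x y = pp (x*ln a/(a powr (1/real m) - 1)) k1 * pp (y*ln a/(a powr (1/real n) - 1)) k2"
proof -
  have "a powr (1/real m) > 1" "a powr (1/real n) > 1" using assms by auto
  then show ?thesis unfolding s_basis_def using s_fact assms by simp
qed

theorem lemma5:
  fixes a c d :: real
  assumes "a > 1" and "c > 0" and "d > 0"
  shows "\<exists>Mx My. Mx > 0 \<and> My > 0 \<and>
    (\<forall>x y m n. 0 \<le> x \<and> x \<le> c \<and> 0 \<le> y \<and> y \<le> d \<and> m \<ge> 1 \<and> n \<ge> 1 \<longrightarrow>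
       Yhat m n a (\<lambda>t s. (t - x) ^ 4) x y \<le> Mx / (real m) ^ 2 \<and>
       Yhat m n a (\<lambda>t s. (s - y) ^ 4) x y \<le> My / (real n) ^ 2)"
proof -
  have L: "ln a > 0" using assms by simp
  define Mx where "Mx = c + 3*c^2 + 6*(c*ln a)^2*c + (c*ln a)^4"
  define My where "My = d + 3*d^2 + 6*(d*ln a)^2*d + (d*ln a)^4"
  have Mx: "Mx > 0" using assms L unfolding Mx_def by (simp add: add_pos_nonneg)
  have My: "My > 0" using assms L unfolding My_def by (simp add: add_pos_nonneg)
  show ?thesis
  proof (intro exI conjI allI impI)
    fix x y :: real and m n :: nat
    assume H: "0 \<le> x \<and> x \<le> c \<and> 0 \<le> y \<and> y \<le> d \<and> m \<ge> 1 \<and> n \<ge> 1"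
    define lx where "lx = x*ln a/(a powr (1/real m) - 1)"
    define ly where "ly = y*ln a/(a powr (1/real n) - 1)"
    have B: "s_basis a m n k1 k2 x y = pp lx k1 * pp ly k2" for k1 k2
      unfolding lx_def ly_def using basis_fact assms H by simp
    have inner1: "(\<lambda>k2. pp lx k1 * pp ly k2 * g) sums (pp lx k1 * g)" for k1 g
      using sums_mult[OF pois1[of ly], of "pp lx k1 * g"] by (simp add: ac_simps)
    have "Yhat m n a (\<lambda>t s. (t - x) ^ 4) x y = (\<Sum>k1. pp lx k1 * (real k1 / real m - x)^4)"
      unfolding Yhat_def B by (intro suminf_cong) (rule sums_unique[OF inner1, symmetric])
    also have "\<dots> = Gm lx m x" using pois4'[of lx m x] sums_unique by metis
    also have "\<dots> \<le> Mx / (real m)^2" unfolding lx_def Mx_def using bound_core[of a m x c] assms H by simp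
    finally show "Yhat m n a (\<lambda>t s. (t - x) ^ 4) x y \<le> Mx / (real m) ^ 2" .
    have inner2: "(\<lambda>k2. pp lx k1 * pp ly k2 * (real k2 / real n - y)^4) sums (pp lx k1 * Gm ly n y)" for k1
      using sums_mult[OF pois4'[of ly n y], of "pp lx k1"] by (simp add: ac_simps)
    have "Yhat m n a (\<lambda>t s. (s - y) ^ 4) x y = (\<Sum>k1. pp lx k1 * Gm ly n y)"
      unfolding Yhat_def B by (intro suminf_cong) (rule sums_unique[OF inner2, symmetric])
    also have "\<dots> = Gm ly n y"
      using sums_mult2[OF pois1[of lx], of "Gm ly n y"] sums_unique by (metis mult_1)
    also have "\<dots> \<le> My / (real n)^2" unfolding ly_def My_def using bound_core[of a n y d] assms H by simp
    finally show "Yhat m n a (\<lambda>t s. (s - y) ^ 4) x y \<le> My / (real n) ^ 2" .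
  qed (use Mx My in auto)
qed
end
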